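(* There exist a compact $T_1$ topological space $X$ and a contractive iterated function system on $X$ whose induced Hutchinson operator $F:2^X\to 2^X$ is not a closed mapping (with $2^X$ carrying the Vietoris topology).
   Context: An iterated function system (IFS) on a space $X$ is a finite family $\mathcal{F}=\{f_1,\dots,f_m\}$ of closed mappings $X\to X$ (mappings sending closed sets to closed sets; continuity not assumed). It is contractive if for every open cover $\mathcal{U}$ of $X$ there is $n\in\mathbb{N}$ such that for every sequence $(i_1,\dots,i_n)\in\{1,\dots,m\}^n$ the set $f_{i_1}\circ\cdots\circ f_{i_n}[X]$ is contained in some element of $\mathcal{U}$. $2^X$ is the family of nonempty closed subsets of $X$ with the Vietoris topology, whose base consists of the sets $\{K\in 2^X: K\subseteq V_0,\ K\cap V_i\neq\emptyset \text{ for } 1\le i\le k\}$ for $k\in\mathbb{N}$ and open $V_0,\dots,V_k\subseteq X$. The Hutchinson operator is $F(K)=\bigcup_{i=1}^m f_i[K]$. *)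

theory Defs
  imports "HOL-Analysis.Analysis"
begin

definition IFS :: "'a topology \<Rightarrow> nat \<Rightarrow> (nat \<Rightarrow> 'a \<Rightarrow> 'a) \<Rightarrow> bool" where
  "IFS X m fs \<longleftrightarrow> m \<ge> 1 \<and> (\<forall>i<m. closed_map X X (fs i))"

definition comp_word :: "(nat \<Rightarrow> 'a \<Rightarrow> 'a) \<Rightarrow> nat list \<Rightarrow> 'a \<Rightarrow> 'a" where
  "comp_word fs is = foldr (\<lambda>i g. fs i \<circ> g) is id"

definition contractive_IFS :: "'a topology \<Rightarrow> nat \<Rightarrow> (nat \<Rightarrow> 'a \<Rightarrow> 'a) \<Rightarrow> bool" where
  "contractive_IFS X m fs \<longleftrightarrow>
     (\<forall>\<U>. (\<forall>U\<in>\<U>. openin X U) \<and> topspace X \<subseteq> \<Union>\<U> \<longrightarrow>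
        (\<exists>n::nat. \<forall>is. length is = n \<and> set is \<subseteq> {..<m} \<longrightarrow>
            (\<exists>U\<in>\<U>. comp_word fs is ` topspace X \<subseteq> U)))"

definition hyperspace :: "'a topology \<Rightarrow> 'a set set" where
  "hyperspace X = {K. closedin X K \<and> K \<noteq> {}}"

definition vietoris_base :: "'a topology \<Rightarrow> 'a set set set" where
  "vietoris_base X =
     {{K \<in> hyperspace X. K \<subseteq> V0 \<and> (\<forall>V\<in>\<V>. K \<inter> V \<noteq> {})} | V0 \<V>.
        openin X V0 \<and> finite \<V> \<and> (\<forall>V\<in>\<V>. openin X V)}"

definition vietoris :: "'a topology \<Rightarrow> 'a set topology" where
  "vietoris X = topology_generated_by (vietoris_base X)"

definition hutchinson :: "nat \<Rightarrow> (nat \<Rightarrow> 'a \<Rightarrow> 'a) \<Rightarrow> 'a set \<Rightarrow> 'a set" where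
  "hutchinson m fs K = (\<Union>i<m. fs i ` K)"

end

theory Submission
  imports Defs
begin

definition cof0 :: "real set \<Rightarrow> bool" where
  "cof0 U \<longleftrightarrow> (0 \<in> U \<longrightarrow> finite (- U))"

lemma istop_cof0: "istopology cof0"
  unfolding istopology_def cof0_def
proof (intro conjI allI impI)
  fix S T :: "real set"
  assume "0 \<in> S \<longrightarrow> finite (- S)" "0 \<in> T \<longrightarrow> finite (- T)" "0 \<in> S \<inter> T"
  then show "finite (- (S \<inter> T))" by auto
next
  fix K :: "real set set"
  assume a: "\<forall>S\<in>K. 0 \<in> S \<longrightarrow> finite (- S)" "0 \<in> \<Union>K"
  then obtain S where "S \<in> K" "0 \<in> S" by auto
  with a have "finite (- S)" by auto
  moreover have "- \<Union>K \<subseteq> - S" using \<open>S \<in> K\<close> by auto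
  ultimately show "finite (- \<Union>K)" by (rule finite_subset[rotated])
qed

definition Xt :: "real topology" where "Xt = topology cof0"

lemma openin_Xt: "openin Xt U \<longleftrightarrow> (0 \<in> U \<longrightarrow> finite (- U))"
  unfolding Xt_def using istop_cof0 by (simp add: cof0_def)

lemma topspace_Xt [simp]: "topspace Xt = UNIV"
proof -
  have "openin Xt UNIV" by (simp add: openin_Xt)
  then show ?thesis by (metis openin_subset top.extremum_unique)
qed

lemma closedin_Xt: "closedin Xt S \<longleftrightarrow> (0 \<notin> S \<longrightarrow> finite S)"
  by (simp add: closedin_def openin_Xt Compl_eq_Diff_UNIV[symmetric])

definition ff :: "real \<Rightarrow> real" where
  "ff x = (if x = 0 then 0 else if 1 \<le> x then x + 1 else 1)"
definition gg :: "real \<Rightarrow> real" where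
  "gg x = (if x = 0 then 0 else if 1 \<le> x then x + 1 else 2 - x)"
definition fs :: "nat \<Rightarrow> real \<Rightarrow> real" where
  "fs i = (if i = 0 then ff else gg)"

lemma fs_cases: "fs i x = 0 \<and> x = 0 \<or> (x \<noteq> 0 \<and> fs i x \<ge> 1) "
  unfolding fs_def ff_def gg_def by auto

lemma fs_big: "y \<ge> 1 \<Longrightarrow> fs i y = y + 1"
  unfolding fs_def ff_def gg_def by auto

lemma fs_zero: "fs i 0 = 0"
  unfolding fs_def ff_def gg_def by auto

lemma comp_word_bound:
  "ws \<noteq> [] \<Longrightarrow> comp_word fs ws x = 0 \<or> comp_word fs ws x \<ge> real (length ws)"
proof (induction ws)
  case Nil then show ?case by simp
next
  case (Cons i ws)
  have eq: "comp_word fs (i # ws) x = fs i (comp_word fs ws x)"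
    by (simp add: comp_word_def)
  show ?case
  proof (cases "ws = []")
    case True
    then show ?thesis using eq fs_cases[of i x] by (auto simp: comp_word_def)
  next
    case False
    then have "comp_word fs ws x = 0 \<or> comp_word fs ws x \<ge> real (length ws)"
      using Cons by auto
    moreover have "length ws \<ge> 1" using False by (cases ws) auto
    ultimately show ?thesis using eq fs_zero fs_big by fastforce
  qed
qed

lemma compact_Xt: "compact_space Xt"
  unfolding compact_space_def compactin_def
proof (intro conjI allI impI)
  fix \<U> assume a: "(\<forall>x\<in>\<U>. openin Xt x) \<and> topspace Xt \<subseteq> \<Union>\<U>"
  then obtain U where U: "U \<in> \<U>" "0 \<in> U" by auto
  then have fin: "finite (- U)" using a openin_Xt by auto
  have "\<forall>x\<in>- U. \<exists>V\<in>\<U>. x \<in> V" using a by auto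
  then obtain c where c: "\<forall>x\<in>- U. c x \<in> \<U> \<and> x \<in> c x" by metis
  show "\<exists>\<F>. finite \<F> \<and> \<F> \<subseteq> \<U> \<and> topspace Xt \<subseteq> \<Union>\<F>"
    apply (rule exI[of _ "insert U (c ` (- U))"])
    using fin c U by auto
qed simp

lemma t1_Xt: "t1_space Xt"
  unfolding t1_space_def
proof (intro ballI impI)
  fix x y :: real assume "x \<noteq> y"
  then show "\<exists>U. openin Xt U \<and> x \<in> U \<and> y \<notin> U"
    by (intro exI[of _ "- {y}"]) (simp add: openin_Xt)
qed

lemma IFS_Xt: "IFS Xt 2 fs"
  unfolding IFS_def closed_map_def
proof (intro conjI allI impI)
  fix i U assume "closedin Xt U"
  then have "0 \<notin> U \<longrightarrow> finite U" by (simp add: closedin_Xt)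
  then show "closedin Xt (fs i ` U)"
    unfolding closedin_Xt using fs_zero by (metis finite_imageI image_eqI)
qed simp

lemma contr_Xt: "contractive_IFS Xt 2 fs"
  unfolding contractive_IFS_def
proof (intro allI impI)
  fix \<U> assume a: "(\<forall>U\<in>\<U>. openin Xt U) \<and> topspace Xt \<subseteq> \<Union>\<U>"
  then obtain U where U: "U \<in> \<U>" "0 \<in> U" by auto
  then have fin: "finite (- U)" using a openin_Xt by auto
  define b where "b = (\<Sum>x\<in>- U. \<bar>x\<bar>)"
  have bb: "x \<le> b" if "x \<in> - U" for x
  proof -
    have "\<bar>x\<bar> \<le> b" unfolding b_def using member_le_sum[of x "- U" abs] fin that
      by auto
    then show ?thesis by simp
  qed
  define n where "n = Suc (nat \<lceil>b\<rceil>)"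
  have nb: "real n > b" unfolding n_def by linarith
  show "\<exists>n. \<forall>ws. length ws = n \<and> set ws \<subseteq> {..<2} \<longrightarrow> (\<exists>U\<in>\<U>. comp_word fs ws ` topspace Xt \<subseteq> U)"
  proof (intro exI[of _ n] allI impI bexI[OF _ U(1)] subsetI)
    fix ws y assume h: "length ws = n \<and> set ws \<subseteq> {..<2}" "y \<in> comp_word fs ws ` topspace Xt"
    then obtain x where x: "y = comp_word fs ws x" by auto
    have "ws \<noteq> []" using h n_def by auto
    then have "y = 0 \<or> y \<ge> real n" using comp_word_bound[of ws x] x h by auto
    then show "y \<in> U" using U bb nb by force
  qed
qed

definition LL :: "real set" where "LL = {0, 1}"
definition MM :: "nat \<Rightarrow> real set" where "MM j = {1, 3 + real j}"

lemma hutch_single: "hutchinson 2 fs {- 1 - real j} = MM j"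
proof -
  have "{..<2::nat} = {0, 1}" by auto
  then show ?thesis
    unfolding hutchinson_def MM_def fs_def ff_def gg_def by auto
qed

lemma LL_not: "LL \<notin> hutchinson 2 fs ` K"
proof
  assume "LL \<in> hutchinson 2 fs ` K"
  then obtain A where A: "hutchinson 2 fs A = LL" by auto
  then have "1 \<in> (\<Union>i<2. fs i ` A)" unfolding hutchinson_def LL_def by auto
  then obtain i x where ix: "i < 2" "x \<in> A" "fs i x = 1" by auto
  then have "x \<noteq> 0" "x < 1" unfolding fs_def ff_def gg_def
    by (auto split: if_splits)
  then have "gg x = 2 - x" unfolding gg_def by auto
  moreover have "fs 1 x \<in> (\<Union>i<2. fs i ` A)" using ix by auto
  ultimately have "2 - x \<in> LL" using A unfolding hutchinson_def fs_def by auto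
  then show False using \<open>x < 1\<close> unfolding LL_def by auto
qed

lemma ev_notin: "finite S \<Longrightarrow> eventually (\<lambda>j. 3 + real j \<notin> S) sequentially"
proof -
  assume "finite S"
  moreover have "inj (\<lambda>j::nat. 3 + real j)" by (auto simp: inj_def)
  ultimately have "finite ((\<lambda>j::nat. 3 + real j) -` S)" by (rule finite_vimageI)
  then have "finite {j. \<not> (3 + real j \<notin> S)}" by (simp add: vimage_def)
  then show ?thesis unfolding cofinite_eq_sequentially[symmetric] eventually_cofinite .
qed

lemma MM_hyper: "MM j \<in> hyperspace Xt"
  unfolding hyperspace_def MM_def closedin_Xt by auto

lemma conv: "generate_topology_on (vietoris_base Xt) U \<Longrightarrow> LL \<in> U \<Longrightarrow>
   eventually (\<lambda>j. MM j \<in> U) sequentially"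
proof (induction rule: generate_topology_on.induct)
  case Empty then show ?case by simp
next
  case (Int a b) then show ?case by (auto intro: eventually_conj)
next
  case (UN K)
  then obtain k where "k \<in> K" "LL \<in> k" by auto
  with UN have "eventually (\<lambda>j. MM j \<in> k) sequentially" by auto
  then show ?case by eventually_elim (use \<open>k \<in> K\<close> in auto)
next
  case (Basis s)
  then obtain V0 \<V> where s: "s = {K \<in> hyperspace Xt. K \<subseteq> V0 \<and> (\<forall>V\<in>\<V>. K \<inter> V \<noteq> {})}"
    and o: "openin Xt V0" "finite \<V>" "\<forall>V\<in>\<V>. openin Xt V"
    unfolding vietoris_base_def by blast
  have L: "LL \<subseteq> V0" "\<forall>V\<in>\<V>. LL \<inter> V \<noteq> {}" using Basis s by auto
  then have "finite (- V0)" using o openin_Xt LL_def by auto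
  then have e1: "eventually (\<lambda>j. MM j \<subseteq> V0) sequentially"
    using ev_notin[of "- V0"] L unfolding LL_def MM_def
    by (auto elim: eventually_mono)
  have "\<forall>V\<in>\<V>. eventually (\<lambda>j. MM j \<inter> V \<noteq> {}) sequentially"
  proof
    fix V assume V: "V \<in> \<V>"
    show "eventually (\<lambda>j. MM j \<inter> V \<noteq> {}) sequentially"
    proof (cases "1 \<in> V")
      case True then show ?thesis unfolding MM_def by auto
    next
      case False
      then have "0 \<in> V" using L V unfolding LL_def by auto
      then have "finite (- V)" using o V openin_Xt by auto
      from ev_notin[OF this] show ?thesis unfolding MM_def
        by eventually_elim auto
    qed
  qed
  then have e2: "eventually (\<lambda>j. \<forall>V\<in>\<V>. MM j \<inter> V \<noteq> {}) sequentially"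
    by (rule eventually_ball_finite[OF o(2)])
  from e1 e2 show ?case by eventually_elim (auto simp: s MM_hyper)
qed

theorem theorem24:
  shows "\<exists>(X :: real topology) (m :: nat) (fs :: nat \<Rightarrow> real \<Rightarrow> real).
           compact_space X \<and> t1_space X \<and> IFS X m fs \<and> contractive_IFS X m fs \<and>
           \<not> closed_map (vietoris X) (vietoris X) (hutchinson m fs)"
proof (intro exI conjI)
  show "compact_space Xt" by (rule compact_Xt)
  show "t1_space Xt" by (rule t1_Xt)
  show "IFS Xt 2 fs" by (rule IFS_Xt)
  show "contractive_IFS Xt 2 fs" by (rule contr_Xt)
  show "\<not> closed_map (vietoris Xt) (vietoris Xt) (hutchinson 2 fs)"
  proof
    assume cm: "closed_map (vietoris Xt) (vietoris Xt) (hutchinson 2 fs)"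
    let ?T = "topspace (vietoris Xt)"
    have hb: "hyperspace Xt \<in> vietoris_base Xt"
      unfolding vietoris_base_def
      by (rule CollectI, rule exI[of _ UNIV], rule exI[of _ "{}"]) (auto simp: hyperspace_def openin_Xt)
    have Tsub: "hyperspace Xt \<subseteq> ?T"
      unfolding vietoris_def using hb by auto
    have "closedin (vietoris Xt) (hutchinson 2 fs ` ?T)"
      using cm unfolding closed_map_def by auto
    then have op: "generate_topology_on (vietoris_base Xt) (?T - hutchinson 2 fs ` ?T)"
      unfolding closedin_def vietoris_def openin_topology_generated_by_iff by simp
    have "LL \<in> hyperspace Xt" unfolding hyperspace_def LL_def closedin_Xt by auto
    then have "LL \<in> ?T - hutchinson 2 fs ` ?T" using Tsub LL_not by auto
    from conv[OF op this] obtain j where "MM j \<in> ?T - hutchinson 2 fs ` ?T"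
      using eventually_sequentially by auto
    moreover have "{- 1 - real j} \<in> ?T"
      using Tsub unfolding hyperspace_def closedin_Xt by auto
    ultimately show False using hutch_single[of j] by (metis DiffD2 image_eqI)
  qed
qed

end
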